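(* For every integer $n\geq 0$, \[ \overline{C}(0,3,3n+2)=\overline{C}(1,3,3n+2)=\overline{C}(2,3,3n+2)=\frac{\overline{a}(3n+2)}{3}\equiv 0\pmod 2 . \]
   Context: An overpartition is a partition in which the first occurrence of each distinct part size may be overlined; $\ell(\pi)$ counts all parts (overlined and non-overlined). An overcubic partition of $n$ is a pair $(\pi_r,\pi_b)$ of overpartitions, with $\pi_b$ having only even parts, and total sum of parts $n$; $\overline{a}(n)$ denotes their number, so $\sum_n \overline{a}(n)q^n=\prod_{k\ge1}\frac{(1+q^k)(1+q^{2k})}{(1-q^k)(1-q^{2k})}$. The crank of such a pair is $r_c=\ell(\pi_r^{e})-\ell(\pi_b)$, where $\pi_r^{e}$ consists of the even parts of $\pi_r$. $\overline{C}(i,3,n)$ denotes the number of overcubic partitions of $n$ with $r_c\equiv i\pmod 3$. *)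

theory Defs
  imports Main "HOL-Library.Multiset" "HOL-Number_Theory.Cong"
begin

text \<open>An overpartition of m is represented as a pair (P, O): P is the multiset
of all parts (positive integers summing to m), and O is the set of part sizes
whose first occurrence is overlined (O must be a subset of the distinct part sizes).\<close>

type_synonym overpartition = "nat multiset \<times> nat set"

definition is_overpartition :: "nat \<Rightarrow> overpartition \<Rightarrow> bool" where
  "is_overpartition m p \<longleftrightarrow>
     (\<forall>x\<in>#fst p. 0 < x) \<and> sum_mset (fst p) = m \<and> snd p \<subseteq> set_mset (fst p)"

definition opt_len :: "overpartition \<Rightarrow> nat" where
  "opt_len p = size (fst p)"

definition even_parts :: "overpartition \<Rightarrow> overpartition" where
  "even_parts p = (filter_mset even (fst p), {x \<in> snd p. even x})"

definition overcubic :: "nat \<Rightarrow> (overpartition \<times> overpartition) set" where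
  "overcubic n = {(pr, pb). \<exists>a b. a + b = n \<and> is_overpartition a pr \<and> is_overpartition b pb
                                \<and> (\<forall>x\<in>#fst pb. even x)}"

definition abar :: "nat \<Rightarrow> nat" where
  "abar n = card (overcubic n)"

definition crank :: "overpartition \<times> overpartition \<Rightarrow> int" where
  "crank x = int (opt_len (even_parts (fst x))) - int (opt_len (snd x))"

definition Cbar :: "int \<Rightarrow> nat \<Rightarrow> nat \<Rightarrow> nat" where
  "Cbar i k n = card {x \<in> overcubic n. [crank x = i] (mod int k)}"

end

theory Submission
  imports Defs "HOL-Computational_Algebra.Formal_Power_Series"
begin
unbundle fps_syntax

type_synonym cfps = "complex fps"

abbreviation XX :: cfps where "XX \<equiv> fps_X"

fun poch :: "nat \<Rightarrow> cfps" where
  "poch 0 = 1"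
| "poch (Suc m) = poch m * (1 - XX^(2*Suc m))"

fun gb :: "nat \<Rightarrow> nat \<Rightarrow> cfps" where
  "gb n 0 = 1"
| "gb 0 (Suc k) = 0"
| "gb (Suc n) (Suc k) = gb n k + XX^(2*Suc k) * gb n (Suc k)"

lemma gb_zero: "n < k \<Longrightarrow> gb n k = 0"
proof (induction n arbitrary: k)
  case 0 then show ?case by (cases k) auto
next
  case (Suc n) then show ?case by (cases k) auto
qed

lemma poch_nth0 [simp]: "poch m $ 0 = 1"
  by (induction m) auto

lemma poch_nz: "poch m \<noteq> 0"
  using poch_nth0[of m] by (metis fps_zero_nth one_neq_zero)

lemma gb_cf: "k \<le> n \<Longrightarrow> gb n k * poch k * poch (n-k) = poch n"
proof (induction n arbitrary: k)
  case 0 then show ?case by simp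
next
  case (Suc n)
  show ?case
  proof (cases k)
    case 0 then show ?thesis by simp
  next
    case (Suc k')
    have kn: "k' \<le> n" using Suc.prems Suc by simp
    have A: "gb n k' * poch (Suc k') * poch (n - k') = poch n * (1 - XX^(2*Suc k'))"
      using Suc.IH[OF kn] by (simp add: algebra_simps)
    show ?thesis
    proof (cases "k' = n")
      case True
      then show ?thesis using A Suc by (simp add: gb_zero)
    next
      case False
      then have kn2: "Suc k' \<le> n" using kn by simp
      have nk: "n - k' = Suc (n - Suc k')" using kn2 by simp
      have B: "gb n (Suc k') * poch (Suc k') * poch (n - k') = poch n * (1 - XX^(2*(n-k')))"
      proof -
        have "poch (n - k') = poch (n - Suc k') * (1 - XX^(2*(n-k')))"
          using nk by (metis poch.simps(2))
        then show ?thesis using Suc.IH[OF kn2] by (simp only: mult.assoc[symmetric])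
      qed
      have e: "XX^(2*Suc k') * XX^(2*(n-k')) = XX^(2*Suc n)"
        using kn2 by (simp add: power_add[symmetric])
      have "gb (Suc n) k * poch k * poch (Suc n - k)
          = gb n k' * poch (Suc k') * poch (n - k') + XX^(2*Suc k') * (gb n (Suc k') * poch (Suc k') * poch (n - k'))"
        using Suc by (simp add: algebra_simps)
      also have "\<dots> = poch n * (1 - XX^(2*Suc k')) + XX^(2*Suc k') * (poch n * (1 - XX^(2*(n-k'))))"
        using A B by simp
      also have "\<dots> = poch n * (1 - XX^(2*Suc k') * XX^(2*(n-k')))"
        by (simp add: algebra_simps)
      also have "\<dots> = poch (Suc n)" using e by simp
      finally show ?thesis .
    qed
  qed
qed

lemma gb_P2: "gb (Suc n) (Suc k) = XX^(2*(n-k)) * gb n k + gb n (Suc k)"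
proof (cases "k \<le> n")
  case False then show ?thesis by (simp add: gb_zero)
next
  case True
  define D where "D = poch (Suc k) * poch (n-k)"
  have Dnz: "D \<noteq> 0" unfolding D_def by (metis poch_nz mult_eq_0_iff)
  have L: "gb (Suc n) (Suc k) * D = poch (Suc n)"
    using gb_cf[of "Suc k" "Suc n"] True unfolding D_def by (simp add: mult.assoc)
  have R1: "XX^(2*(n-k)) * gb n k * D = XX^(2*(n-k)) * (1 - XX^(2*Suc k)) * poch n"
  proof -
    have "XX^(2*(n-k)) * gb n k * D = XX^(2*(n-k)) * (1 - XX^(2*Suc k)) * (gb n k * poch k * poch (n-k))"
      unfolding D_def by (simp add: algebra_simps)
    then show ?thesis using gb_cf[OF True] by simp
  qed
  have R2: "gb n (Suc k) * D = (1 - XX^(2*(n-k))) * poch n"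
  proof (cases "k = n")
    case True then show ?thesis by (simp add: gb_zero)
  next
    case False
    then have kn2: "Suc k \<le> n" using True by simp
    have nk: "n - k = Suc (n - Suc k)" using kn2 by simp
    have pe: "poch (n - k) = poch (n - Suc k) * (1 - XX^(2*(n-k)))"
      using nk by (metis poch.simps(2))
    have "gb n (Suc k) * D = (1 - XX^(2*(n-k))) * (gb n (Suc k) * poch (Suc k) * poch (n - Suc k))"
      unfolding D_def pe by (simp only: mult_ac)
    then show ?thesis by (simp only: gb_cf[OF kn2])
  qed
  have e: "XX^(2*(n-k)) * XX^(2*Suc k) = XX^(2*Suc n)"
    using True by (simp add: power_add[symmetric])
  have "(XX^(2*(n-k)) * gb n k + gb n (Suc k)) * D = poch (Suc n)"
    using R1 R2 e by (simp add: algebra_simps)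
  then show ?thesis using L Dnz by (metis mult_right_cancel)
qed

lemma gb_T3: "gb (Suc (Suc n)) (Suc m) = (1 + XX^(2*Suc n)) * gb n m
   + (if m = 0 then 0 else XX^(2*(Suc n - m)) * gb n (m-1)) + XX^(2*Suc m) * gb n (Suc m)"
proof -
  have a: "gb (Suc (Suc n)) (Suc m) = gb (Suc n) m + XX^(2*Suc m) * gb (Suc n) (Suc m)" by simp
  have b: "gb (Suc n) (Suc m) = XX^(2*(n-m)) * gb n m + gb n (Suc m)" by (rule gb_P2)
  have c: "gb (Suc n) m = (if m = 0 then 0 else XX^(2*(Suc n - m)) * gb n (m-1)) + gb n m"
  proof (cases m)
    case 0 then show ?thesis by simp
  next
    case (Suc m') then show ?thesis using gb_P2[of n m'] by simp
  qed
  have d: "XX^(2*Suc m) * (XX^(2*(n-m)) * gb n m) = XX^(2*Suc n) * gb n m"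
  proof (cases "m \<le> n")
    case True
    then have "XX^(2*Suc m) * XX^(2*(n-m)) = XX^(2*Suc n)" by (simp add: power_add[symmetric])
    then show ?thesis by (metis mult.assoc)
  next
    case False then show ?thesis by (simp add: gb_zero)
  qed
  show ?thesis unfolding a b c using d by (simp add: algebra_simps)
qed

definition gbi :: "nat \<Rightarrow> int \<Rightarrow> cfps" where
  "gbi n m = (if m < 0 then 0 else gb n (nat m))"

definition JT :: "nat \<Rightarrow> int \<Rightarrow> cfps" where
  "JT N k = XX^(nat (k*k)) * gbi (2*N) (int N + k)"

lemma JT_rec: "JT (Suc N) k = (1 + XX^(2*(2*N+1))) * JT N k + XX^(2*N+1) * JT N (k-1) + XX^(2*N+1) * JT N (k+1)"
proof (cases "int N + k \<ge> 0")
  case False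
  show ?thesis
  proof (cases "int N + k = -1")
    case True
    then have k: "k = - int N - 1" by simp
    have e: "nat (k*k) = 2*N+1 + nat ((k+1)*(k+1))"
    proof -
      have "int (nat (k*k)) = k*k" by simp
      also have "\<dots> = 2*N+1 + (k+1)*(k+1)" unfolding k by (simp add: algebra_simps)
      also have "\<dots> = int (2*N+1 + nat ((k+1)*(k+1)))" by simp
      finally have "int (nat (k*k)) = int (2*N+1 + nat ((k+1)*(k+1)))" .
      then show ?thesis by linarith
    qed
    show ?thesis using True False unfolding JT_def gbi_def e
      by (simp add: power_add algebra_simps)
  next
    case False2: False
    then show ?thesis using False unfolding JT_def gbi_def by simp
  qed
next
  case True
  then obtain m where m: "int N + k = int m" by (metis nonneg_int_cases)
  have l: "JT (Suc N) k = XX^(nat (k*k)) * gb (Suc (Suc (2*N))) (Suc m)"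
  proof -
    have a: "int (Suc N) + k = int (Suc m)" using m by simp
    have b: "2 * Suc N = Suc (Suc (2*N))" by simp
    have c: "nat (int (Suc m)) = Suc m" by (rule nat_int)
    show ?thesis unfolding JT_def gbi_def a b c by (simp del: gb.simps of_nat_Suc)
  qed
  have t1: "XX^(nat (k*k)) * ((1 + XX^(2*Suc (2*N))) * gb (2*N) m) = (1 + XX^(2*(2*N+1))) * JT N k"
    unfolding JT_def gbi_def using m by (simp add: algebra_simps)
  have t2: "XX^(nat (k*k)) * (if m = 0 then 0 else XX^(2*(Suc (2*N) - m)) * gb (2*N) (m-1)) = XX^(2*N+1) * JT N (k-1)"
  proof (cases "m = 0")
    case True then show ?thesis unfolding JT_def gbi_def using m by simp
  next
    case False
    show ?thesis
    proof (cases "m \<le> Suc (2*N)")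
      case True
      have e: "nat (k*k) + 2*(Suc (2*N) - m) = 2*N+1 + nat ((k-1)*(k-1))"
      proof -
        have k: "k = int m - int N" using m by simp
        have "int (nat (k*k) + 2*(Suc (2*N) - m)) = k*k + 2*(int (Suc (2*N)) - int m)"
          using True by (simp add: of_nat_diff)
        also have "\<dots> = 2*N+1 + (k-1)*(k-1)" unfolding k by (simp add: algebra_simps)
        also have "\<dots> = int (2*N+1 + nat ((k-1)*(k-1)))" by simp
        finally have "int (nat (k*k) + 2*(Suc (2*N) - m)) = int (2*N+1 + nat ((k-1)*(k-1)))" .
        then show ?thesis by linarith
      qed
      have g: "gbi (2*N) (int N + (k-1)) = gb (2*N) (m-1)"
      proof -
        have "int N + (k-1) = int (m-1)" using m False by (simp add: of_nat_diff)
        then show ?thesis unfolding gbi_def by (simp del: of_nat_diff)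
      qed
      have p: "XX^(nat (k*k)) * XX^(2*(Suc (2*N) - m)) = XX^(2*N+1) * XX^(nat ((k-1)*(k-1)))"
        by (simp only: power_add[symmetric] e)
      show ?thesis using False unfolding JT_def g
        by (simp only: mult.assoc[symmetric] p if_False)
    next
      case False2: False
      have g: "gbi (2*N) (int N + (k-1)) = 0"
        unfolding gbi_def using m False2 by (simp add: gb_zero nat_diff_distrib)
      show ?thesis using False False2 unfolding JT_def g by (simp add: gb_zero)
    qed
  qed
  have t3: "XX^(nat (k*k)) * (XX^(2*Suc m) * gb (2*N) (Suc m)) = XX^(2*N+1) * JT N (k+1)"
  proof -
    have e: "nat (k*k) + 2*Suc m = 2*N+1 + nat ((k+1)*(k+1))"
    proof -
      have k: "k = int m - int N" using m by simp
      have "int (nat (k*k) + 2*Suc m) = k*k + 2*(int m + 1)" by simp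
      also have "\<dots> = 2*N+1 + (k+1)*(k+1)" unfolding k by (simp add: algebra_simps)
      also have "\<dots> = int (2*N+1 + nat ((k+1)*(k+1)))" by simp
      finally have "int (nat (k*k) + 2*Suc m) = int (2*N+1 + nat ((k+1)*(k+1)))" .
      then show ?thesis by linarith
    qed
    have g: "gbi (2*N) (int N + (k+1)) = gb (2*N) (Suc m)"
    proof -
      have "int N + (k+1) = int (Suc m)" using m by simp
      then show ?thesis unfolding gbi_def by (simp only: nat_int) simp
    qed
    have p: "XX^(nat (k*k)) * XX^(2*Suc m) = XX^(2*N+1) * XX^(nat ((k+1)*(k+1)))"
      by (simp only: power_add[symmetric] e)
    show ?thesis unfolding JT_def g
      by (simp only: mult.assoc[symmetric] p)
  qed
  show ?thesis unfolding l gb_T3 using t1 t2 t3 by (simp add: algebra_simps)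
qed

lemma JT_supp: "\<bar>k\<bar> > int N \<Longrightarrow> JT N k = 0"
  unfolding JT_def gbi_def by (auto simp: gb_zero)

definition JS :: "nat \<Rightarrow> cfps" where
  "JS N = (\<Sum>k\<in>{-int N..int N}. JT N k)"

definition JP :: "nat \<Rightarrow> cfps" where
  "JP N = (\<Prod>j\<in>{1..N}. (1 + XX^(2*j-1))^2)"

lemma sum_shift_int: "(\<Sum>k\<in>{c..d::int}. f (k + s)) = (\<Sum>k\<in>{c+s..d+s}. f k)"
  by (rule sum.reindex_bij_witness[of _ "\<lambda>k. k - s" "\<lambda>k. k + s"]) auto

lemma JT_sum_wide: "int N \<le> L \<Longrightarrow> (\<Sum>k\<in>{-L..L}. JT N k) = JS N"
  unfolding JS_def
  by (rule sum.mono_neutral_right) (auto intro!: JT_supp)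

lemma JT_sum_wide2: "L \<le> -int N \<Longrightarrow> int N \<le> R \<Longrightarrow> (\<Sum>k\<in>{L..R}. JT N k) = JS N"
  unfolding JS_def
  by (rule sum.mono_neutral_right) (auto intro!: JT_supp)

lemma JS_eq_JP: "JS N = JP N"
proof (induction N)
  case 0
  show ?case unfolding JS_def JP_def JT_def gbi_def by simp
next
  case (Suc N)
  let ?I = "{- int (Suc N)..int (Suc N)}"
  have s1: "(\<Sum>k\<in>?I. JT N (k - 1)) = JS N"
  proof -
    have "(\<Sum>k\<in>?I. JT N (k - 1)) = (\<Sum>k\<in>?I. JT N (k + (-1)))" by simp
    also have "\<dots> = (\<Sum>k\<in>{- int (Suc N) + -1..int (Suc N) + -1}. JT N k)" by (rule sum_shift_int)
    also have "\<dots> = JS N" by (rule JT_sum_wide2) auto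
    finally show ?thesis .
  qed
  have s2: "(\<Sum>k\<in>?I. JT N (k + 1)) = JS N"
  proof -
    have "(\<Sum>k\<in>?I. JT N (k + 1)) = (\<Sum>k\<in>{- int (Suc N) + 1..int (Suc N) + 1}. JT N k)" by (rule sum_shift_int)
    also have "\<dots> = JS N" by (rule JT_sum_wide2) auto
    finally show ?thesis .
  qed
  have s0: "(\<Sum>k\<in>?I. JT N k) = JS N" by (rule JT_sum_wide) simp
  have "JS (Suc N) = (\<Sum>k\<in>?I. (1 + XX^(2*(2*N+1))) * JT N k + XX^(2*N+1) * JT N (k-1) + XX^(2*N+1) * JT N (k+1))"
    unfolding JS_def by (intro sum.cong refl JT_rec)
  also have "\<dots> = (1 + XX^(2*(2*N+1))) * JS N + XX^(2*N+1) * JS N + XX^(2*N+1) * JS N"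
    by (simp only: sum.distrib sum_distrib_left[symmetric] s0 s1 s2)
  also have "\<dots> = JS N * (1 + XX^(2*Suc N - 1))^2"
  proof -
    have a: "2*Suc N - 1 = 2*N+1" by simp
    have b: "XX^(2*(2*N+1)) = XX^(2*N+1) * XX^(2*N+1)"
      by (simp only: mult_2 power_add)
    show ?thesis unfolding a b by (simp only: power2_eq_square ring_distribs mult_1_left mult_1_right add_ac mult_ac)
  qed
  also have "\<dots> = JP (Suc N)" unfolding JP_def using Suc.IH unfolding JP_def by simp
  finally show ?case .
qed

definition eqm :: "nat \<Rightarrow> cfps \<Rightarrow> cfps \<Rightarrow> bool" where
  "eqm n f g \<longleftrightarrow> (\<forall>t<n. f $ t = g $ t)"

lemma eqm_refl [simp]: "eqm n f f" unfolding eqm_def by simp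

lemma eqm_sym: "eqm n f g \<Longrightarrow> eqm n g f" unfolding eqm_def by simp

lemma eqm_trans: "eqm n f g \<Longrightarrow> eqm n g h \<Longrightarrow> eqm n f h" unfolding eqm_def by simp

lemma eqm_mult: "eqm n f g \<Longrightarrow> eqm n f' g' \<Longrightarrow> eqm n (f*f') (g*g')"
  unfolding eqm_def fps_mult_nth by (auto intro!: sum.cong)

lemma eqm_cancel:
  assumes "eqm n (a*p) (b*p)" "p $ 0 \<noteq> 0"
  shows "eqm n a b"
proof -
  have "eqm n (a*p*inverse p) (b*p*inverse p)" using eqm_mult[OF assms(1) eqm_refl] .
  moreover have "p * inverse p = 1" using assms(2) by (rule inverse_mult_eq_1')
  ultimately show ?thesis by (simp add: mult.assoc)
qed

lemma eqm_mult_1minus: "n \<le> j \<Longrightarrow> eqm n (f * (1 - XX^j)) f"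
  unfolding eqm_def by (simp add: right_diff_distrib fps_X_power_mult_right_nth)

lemma poch_trunc: "r \<le> m \<Longrightarrow> eqm (2*(r+1)) (poch m) (poch r)"
proof (induction m)
  case 0 then show ?case by simp
next
  case (Suc m)
  show ?case
  proof (cases "r = Suc m")
    case True then show ?thesis by simp
  next
    case False
    then have "r \<le> m" using Suc.prems by simp
    then have "eqm (2*(r+1)) (poch m * (1 - XX^(2*Suc m))) (poch r)"
      using eqm_trans[OF eqm_mult_1minus[of "2*(r+1)" "2*Suc m"] Suc.IH] by simp
    then show ?thesis by simp
  qed
qed

lemma gb_approx:
  assumes i: "i \<le> 2*N"
  defines "r \<equiv> min i (2*N - i)"
  shows "eqm (2*(r+1)) (gb (2*N) i * poch N) 1"
proof -
  define P where "P = poch r"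
  define h where "h = gb (2*N) i * poch N"
  have cf: "h * (poch i * poch (2*N-i)) = poch (2*N) * poch N"
    using gb_cf[OF i] unfolding h_def by (simp add: mult_ac)
  have r1: "r \<le> i" "r \<le> 2*N - i" "r \<le> 2*N" "r \<le> N" unfolding r_def by auto
  have e1: "eqm (2*(r+1)) (poch i * poch (2*N-i)) (P*P)"
    unfolding P_def by (intro eqm_mult poch_trunc r1)
  have e2: "eqm (2*(r+1)) (poch (2*N) * poch N) (P*P)"
    unfolding P_def by (intro eqm_mult poch_trunc r1)
  have "eqm (2*(r+1)) (h * (P*P)) (h * (poch i * poch (2*N-i)))"
    by (intro eqm_mult eqm_refl eqm_sym[OF e1])
  then have "eqm (2*(r+1)) (h * (P*P)) (1 * (P*P))"
    using e2 cf by (simp add: eqm_trans)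
  moreover have "(P*P) $ 0 \<noteq> 0" unfolding P_def by simp
  ultimately show ?thesis unfolding h_def by (rule eqm_cancel)
qed

lemma sq_mod3: "(k*k::int) mod 3 \<noteq> 2"
proof -
  have "(k*k) mod 3 = ((k mod 3)*(k mod 3)) mod 3" by (simp add: mod_mult_eq)
  moreover have "k mod 3 = 0 \<or> k mod 3 = 1 \<or> k mod 3 = 2" by arith
  ultimately show ?thesis by auto
qed

lemma JTP_nth:
  assumes m: "m \<le> 2*N" and k: "\<bar>k\<bar> \<le> int N"
  shows "(JT N k * poch N) $ m = (if m = nat (k*k) then 1 else 0)"
proof -
  define i where "i = nat (int N + k)"
  have i2: "i \<le> 2*N" unfolding i_def using k by simp
  have gi: "gbi (2*N) (int N + k) = gb (2*N) i" unfolding gbi_def i_def using k by simp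
  define r where "r = min i (2*N - i)"
  have ii: "int i = int N + k" unfolding i_def using k by simp
  have r: "int r = int N - \<bar>k\<bar>" unfolding r_def using ii i2 by (auto simp: min_def of_nat_diff abs_if)
  have ap: "eqm (2*(r+1)) (gb (2*N) i * poch N) 1" unfolding r_def by (rule gb_approx[OF i2])
  have eq: "JT N k * poch N = XX^(nat (k*k)) * (gb (2*N) i * poch N)"
    unfolding JT_def gi by (simp add: mult.assoc)
  show ?thesis
  proof (cases "m < nat (k*k)")
    case True then show ?thesis unfolding eq fps_X_power_mult_nth by simp
  next
    case False
    have lt: "m - nat (k*k) < 2*(r+1)"
    proof -
      have "int (m - nat (k*k)) = int m - k*k" using False by (simp add: of_nat_diff)
      also have "\<dots> \<le> 2*int N - k*k" using m by simp
      also have "\<dots> < 2*(int r + 1)" unfolding r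
      proof -
        have "(\<bar>k\<bar> - 1)*(\<bar>k\<bar> - 1) \<ge> 0" by simp
        then have "k*k - 2*\<bar>k\<bar> + 1 \<ge> 0" by (simp add: algebra_simps abs_mult_self_eq)
        then show "2*int N - k*k < 2*(int N - \<bar>k\<bar> + 1)" by simp
      qed
      finally have "int (m - nat (k*k)) < int (2*(r+1))" by simp
      then show ?thesis by (simp only: of_nat_less_iff)
    qed
    have "(gb (2*N) i * poch N) $ (m - nat (k*k)) = (1::cfps) $ (m - nat (k*k))"
      using ap lt unfolding eqm_def by blast
    then show ?thesis unfolding eq fps_X_power_mult_nth using False by auto
  qed
qed

lemma JP_V2:
  assumes m: "m \<le> 2*N" "m mod 3 = 2"
  shows "(JP N * poch N) $ m = 0"
proof -
  have "(JP N * poch N) $ m = (\<Sum>k\<in>{-int N..int N}. (JT N k * poch N) $ m)"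
    unfolding JS_eq_JP[symmetric] JS_def by (simp add: sum_distrib_right fps_sum_nth)
  also have "\<dots> = 0"
  proof (rule sum.neutral, rule ballI)
    fix k assume "k \<in> {-int N..int N}"
    then have k: "\<bar>k\<bar> \<le> int N" by auto
    have "m \<noteq> nat (k*k)"
    proof
      assume "m = nat (k*k)"
      then have "int m = k*k" by simp
      then have "(k*k) mod 3 = 2" using m(2) by (metis of_nat_numeral zmod_int)
      then show False using sq_mod3 by blast
    qed
    then show "(JT N k * poch N) $ m = 0" using JTP_nth[OF m(1) k] by simp
  qed
  finally show ?thesis .
qed



definition zeta :: complex where "zeta = Complex (-1/2) (sqrt 3 / 2)"

lemma zeta_sq: "zeta * zeta = Complex (-1/2) (- sqrt 3 / 2)"
  unfolding zeta_def by (simp add: complex_eq_iff)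

lemma zeta_sum: "1 + zeta + zeta^2 = 0"
  unfolding power2_eq_square zeta_sq by (simp add: zeta_def complex_eq_iff)

lemma zeta_cube: "zeta^3 = 1"
proof -
  have "zeta^3 = zeta * (zeta * zeta)" by (simp add: power3_eq_cube)
  also have "\<dots> = 1" unfolding zeta_sq by (simp add: zeta_def complex_eq_iff field_simps)
  finally show ?thesis .
qed

definition gser :: "complex \<Rightarrow> nat \<Rightarrow> cfps" where
  "gser c k = Abs_fps (\<lambda>n. if n = 0 then 1 else if k dvd n then 2 * c^(n div k) else 0)"

lemma gser_eq:
  assumes k: "k > 0"
  shows "gser c k * (1 - fps_const c * XX^k) = 1 + fps_const c * XX^k"
proof (rule fps_ext)
  fix n
  have l: "(gser c k * (1 - fps_const c * XX^k)) $ n = gser c k $ n - (if n < k then 0 else c * gser c k $ (n-k))"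
  proof -
    have "gser c k * (1 - fps_const c * XX^k) = gser c k - fps_const c * (XX^k * gser c k)"
      by (simp add: algebra_simps)
    then show ?thesis by (simp add: fps_X_power_mult_nth)
  qed
  show "(gser c k * (1 - fps_const c * XX^k)) $ n = (1 + fps_const c * XX^k) $ n"
  proof (cases "n < k")
    case True then show ?thesis unfolding l using k by (auto simp: gser_def dest: dvd_imp_le)
  next
    case False
    then have nk: "n - k + k = n" by simp
    show ?thesis
    proof (cases "k dvd n")
      case True
      then obtain j where j: "n = k * j" by blast
      with False k have j1: "j \<ge> 1" by (cases j) auto
      show ?thesis
      proof (cases "j = 1")
        case True then show ?thesis unfolding l using j k by (simp add: gser_def)
      next
        case False
        then obtain j' where j': "j = Suc (Suc j')" using j1 by (cases j; cases "j - 1") auto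
        have a: "n - k = k * Suc j'" using j j' by simp
        have b: "n \<noteq> k" using j j' k by simp
        show ?thesis unfolding l using j j' k a b by (simp add: gser_def)
      qed
    next
      case False2: False
      have "\<not> k dvd (n - k)" using False2 False by (metis dvd_add_triv_right_iff nk)
      moreover have "n \<noteq> k" using False2 by auto
      ultimately show ?thesis unfolding l using False2 k by (simp add: gser_def)
    qed
  qed
qed

lemma zeta_c1: "fps_const zeta + fps_const (zeta^2) = (-1 :: cfps)"
proof -
  have "zeta + zeta^2 = -1" using zeta_sum by (simp add: algebra_simps eq_neg_iff_add_eq_0)
  then show ?thesis by (metis fps_const_add fps_const_neg fps_const_1_eq_1)
qed

lemma zeta_c2: "fps_const zeta * fps_const (zeta^2) = (1 :: cfps)"
proof -
  have "zeta * zeta^2 = 1" using zeta_cube by (simp add: power3_eq_cube power2_eq_square mult.assoc)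
  then show ?thesis by (metis fps_const_mult fps_const_1_eq_1)
qed

lemma quadg1: "(1 - s * x) * (1 - t * x) = 1 - (s + t) * x + (s * t) * x * (x::'a::comm_ring_1)"
  by (simp add: algebra_simps)

lemma quadg2: "(1 + s * x) * (1 + t * x) = 1 + (s + t) * x + (s * t) * x * (x::'a::comm_ring_1)"
  by (simp add: algebra_simps)

lemma quad1: "(1 - fps_const zeta * x) * (1 - fps_const (zeta^2) * x) = 1 + x + x*(x::cfps)"
proof -
  have "(1 - fps_const zeta * x) * (1 - fps_const (zeta^2) * x)
      = 1 - (fps_const zeta + fps_const (zeta^2)) * x + (fps_const zeta * fps_const (zeta^2)) * x * x"
    by (rule quadg1)
  then show ?thesis unfolding zeta_c1 zeta_c2 by simp
qed

lemma quad2: "(1 + fps_const zeta * x) * (1 + fps_const (zeta^2) * x) = 1 - x + x*(x::cfps)"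
proof -
  have "(1 + fps_const zeta * x) * (1 + fps_const (zeta^2) * x)
      = 1 + (fps_const zeta + fps_const (zeta^2)) * x + (fps_const zeta * fps_const (zeta^2)) * x * x"
    by (rule quadg2)
  then show ?thesis unfolding zeta_c1 zeta_c2 by simp
qed

definition G :: "nat \<Rightarrow> cfps" where
  "G j = gser 1 (2*j-1) * gser zeta (2*j) * gser (zeta^2) (2*j)"

lemma G_id:
  assumes j: "j \<ge> 1"
  shows "G j * ((1 - XX^(2*(2*j-1))) * (1 + XX^(2*j)) * (1 - XX^(6*j)))
       = (1 + XX^(2*j-1))^2 * (1 - XX^(2*j)) * (1 + XX^(6*j))"
proof -
  define a where "a = XX^(2*j-1)"
  define x where "x = XX^(2*j)"
  have a2: "XX^(2*(2*j-1)) = a*a" unfolding a_def by (simp add: mult_2 power_add)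
  have x3: "XX^(6*j) = x*x*x" unfolding x_def
    by (simp add: power_add[symmetric] power_mult[symmetric])
  have g1: "gser 1 (2*j-1) * (1 - a) = 1 + a"
    using gser_eq[of "2*j-1" 1] j unfolding a_def by simp
  have g2: "gser zeta (2*j) * (1 - fps_const zeta * x) = 1 + fps_const zeta * x"
    using gser_eq[of "2*j" zeta] j unfolding x_def by simp
  have g3: "gser (zeta^2) (2*j) * (1 - fps_const (zeta^2) * x) = 1 + fps_const (zeta^2) * x"
    using gser_eq[of "2*j" "zeta^2"] j unfolding x_def by simp
  have "G j * ((1 - a*a) * (1 + x) * (1 - x*x*x))
      = (gser 1 (2*j-1) * (1 - a)) * (gser zeta (2*j) * (1 - fps_const zeta * x))
        * (gser (zeta^2) (2*j) * (1 - fps_const (zeta^2) * x)) * ((1 + a) * (1 + x) * (1 - x))"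
  proof -
    have "(1 - x*x*x) = (1 - x) * ((1 - fps_const zeta * x) * (1 - fps_const (zeta^2) * x))"
      unfolding quad1 by (simp add: algebra_simps)
    moreover have "1 - a*a = (1 - a) * (1 + a)" by (simp add: algebra_simps)
    ultimately show ?thesis unfolding G_def by (simp only: mult_ac)
  qed
  also have "\<dots> = (1 + a) * (1 + a) * (1 - x) * ((1 + fps_const zeta * x) * (1 + fps_const (zeta^2) * x) * (1 + x))"
    unfolding g1 g2 g3 by (simp only: mult_ac)
  also have "\<dots> = (1 + a) * (1 + a) * (1 - x) * (1 + x*x*x)"
    unfolding quad2 by (simp add: algebra_simps)
  finally show ?thesis unfolding a2 x3 by (simp add: a_def x_def power2_eq_square)
qed

definition Fp :: "nat \<Rightarrow> cfps" where "Fp N = (\<Prod>j\<in>{1..N}. G j)"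
definition Ef :: "nat \<Rightarrow> cfps" where "Ef N = (\<Prod>j\<in>{1..N}. (1 - XX^(2*(2*j-1))) * (1 + XX^(2*j)))"
definition Tf :: "nat \<Rightarrow> cfps" where "Tf N = (\<Prod>j\<in>{N+1..2*N}. 1 - XX^(2*j))"
definition Q1 :: "nat \<Rightarrow> cfps" where "Q1 N = (\<Prod>j\<in>{1..N}. 1 - XX^(6*j))"
definition Q2 :: "nat \<Rightarrow> cfps" where "Q2 N = (\<Prod>j\<in>{1..N}. 1 + XX^(6*j))"

lemma poch_prod: "poch N = (\<Prod>j\<in>{1..N}. 1 - XX^(2*j))"
  by (induction N) auto

lemma one_minus_nz: "m > 0 \<Longrightarrow> (1 - XX^m :: cfps) \<noteq> 0"
proof
  assume "m > 0" "(1 - XX^m :: cfps) = 0"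
  then have "(1 - XX^m :: cfps) $ 0 = 0" by simp
  with \<open>m > 0\<close> show False by simp
qed

lemma Tf_Suc: "Tf (Suc N) * (1 - XX^(2*(N+1))) = Tf N * (1 - XX^(2*(2*N+1))) * (1 - XX^(2*(2*N+2)))"
proof -
  let ?f = "\<lambda>j. 1 - XX^(2*j) :: cfps"
  have a: "prod ?f {N+1..2*N+2} = ?f (N+1) * Tf (Suc N)"
    unfolding Tf_def by (subst prod.atLeast_Suc_atMost) auto
  have b: "prod ?f {N+1..2*N+2} = Tf N * ?f (2*N+1) * ?f (2*N+2)"
  proof -
    have "{N+1..2*N+2} = {N+1..Suc (Suc (2*N))}" by simp
    then show ?thesis unfolding Tf_def by (simp only:) (simp add: mult_ac)
  qed
  show ?thesis using a b by (simp add: mult_ac)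
qed

lemma Ef_Tf: "Ef N = Tf N"
proof (induction N)
  case 0 then show ?case by (simp add: Ef_def Tf_def)
next
  case (Suc N)
  have "Ef (Suc N) = Ef N * ((1 - XX^(2*(2*N+1))) * (1 + XX^(2*(N+1))))"
    unfolding Ef_def by simp
  then have "Ef (Suc N) * (1 - XX^(2*(N+1))) = Tf N * (1 - XX^(2*(2*N+1))) * ((1 + XX^(2*(N+1))) * (1 - XX^(2*(N+1))))"
    using Suc.IH by (simp add: mult_ac)
  also have "(1 + XX^(2*(N+1))) * (1 - XX^(2*(N+1))) = (1 - XX^(2*(2*N+2)) :: cfps)"
  proof -
    have "XX^(2*(N+1)) * XX^(2*(N+1)) = (XX^(2*(2*N+2)) :: cfps)" by (simp add: power_add[symmetric])
    then show ?thesis by (simp add: algebra_simps)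
  qed
  also have "Tf N * (1 - XX^(2*(2*N+1))) * (1 - XX^(2*(2*N+2))) = Tf (Suc N) * (1 - XX^(2*(N+1)))"
    using Tf_Suc by simp
  finally show ?case using one_minus_nz[of "2*(N+1)"] by (simp add: mult_ac)
qed

lemma prod_1minus_eqm: "finite A \<Longrightarrow> \<forall>j\<in>A. n \<le> 2*j \<Longrightarrow> eqm n (\<Prod>j\<in>A. 1 - XX^(2*j)) 1"
proof (induction A rule: finite_induct)
  case empty then show ?case by simp
next
  case (insert x F)
  then have "eqm n (prod (\<lambda>j. 1 - XX^(2*j)) F * (1 - XX^(2*x))) (1 * 1)"
    by (intro eqm_mult) (auto simp: eqm_def)
  then show ?case using insert by (simp add: mult.commute)
qed

lemma Tf_eqm: "eqm (2*(N+1)) (Tf N) 1"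
  unfolding Tf_def by (rule prod_1minus_eqm) auto

lemma key_id: "Fp N * (Ef N * Q1 N) = JP N * poch N * Q2 N"
proof -
  have "Fp N * (Ef N * Q1 N) = (\<Prod>j\<in>{1..N}. G j * ((1 - XX^(2*(2*j-1))) * (1 + XX^(2*j)) * (1 - XX^(6*j))))"
    unfolding Fp_def Ef_def Q1_def by (simp add: prod.distrib mult_ac)
  also have "\<dots> = (\<Prod>j\<in>{1..N}. (1 + XX^(2*j-1))^2 * (1 - XX^(2*j)) * (1 + XX^(6*j)))"
    by (rule prod.cong[OF refl], rule G_id) simp
  also have "\<dots> = JP N * poch N * Q2 N"
    unfolding JP_def poch_prod Q2_def by (simp add: prod.distrib)
  finally show ?thesis .
qed

definition P3 :: "cfps \<Rightarrow> bool" where "P3 f \<longleftrightarrow> (\<forall>n. n mod 3 \<noteq> 0 \<longrightarrow> f $ n = 0)"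

lemma P3_mult: "P3 f \<Longrightarrow> P3 g \<Longrightarrow> P3 (f * g)"
  unfolding P3_def fps_mult_nth
proof (intro allI impI sum.neutral ballI)
  fix n i :: nat assume f: "\<forall>n. n mod 3 \<noteq> 0 \<longrightarrow> f $ n = 0" and g: "\<forall>n. n mod 3 \<noteq> 0 \<longrightarrow> g $ n = 0"
    and n: "n mod 3 \<noteq> 0" and i: "i \<in> {0..n}"
  show "f $ i * g $ (n - i) = 0"
  proof (cases "i mod 3 = 0")
    case True
    then obtain t where t: "i = 3*t" by auto
    have "n = (n - i) + 3*t" using i t by auto
    then have "n mod 3 = (n - i) mod 3" by (metis mod_mult_self2)
    then have "(n - i) mod 3 \<noteq> 0" using n by simp
    then show ?thesis using g by simp
  next
    case False then show ?thesis using f by simp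
  qed
qed

lemma P3_prod: "finite A \<Longrightarrow> \<forall>j\<in>A. P3 (h j) \<Longrightarrow> P3 (\<Prod>j\<in>A. h j)"
  by (induction A rule: finite_induct) (auto simp: P3_mult, auto simp: P3_def)

lemma P3_X6: "P3 (1 + fps_const c * XX^(6*j))"
  unfolding P3_def by auto

lemma P3_Q1: "P3 (Q1 N)"
proof -
  have "P3 (1 - XX^(6*j))" for j
  proof -
    have "(1::cfps) - XX^(6*j) = 1 + fps_const (-1) * XX^(6*j)" by (simp add: fps_const_neg[symmetric] del: fps_const_neg)
    then show ?thesis using P3_X6 by metis
  qed
  then show ?thesis unfolding Q1_def by (intro P3_prod) auto
qed

lemma P3_Q2: "P3 (Q2 N)"
proof -
  have "P3 (1 + fps_const 1 * XX^(6*j))" for j by (rule P3_X6)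
  then show ?thesis unfolding Q2_def by (intro P3_prod) auto
qed

lemma mod3_sub: "i \<le> n \<Longrightarrow> (n - i) mod 3 = 0 \<Longrightarrow> i mod 3 = (n::nat) mod 3"
proof -
  assume a: "i \<le> n" "(n - i) mod 3 = 0"
  then obtain t where t: "n - i = 3*t" by auto
  have "n = i + 3*t" using a t by auto
  then show ?thesis by (metis mod_mult_self2)
qed

lemma V2_mult:
  assumes f: "\<forall>i\<le>m. i mod 3 = 2 \<longrightarrow> f $ i = 0" and g: "P3 g" and m: "m mod 3 = 2"
  shows "(f * g) $ m = 0"
  unfolding fps_mult_nth
proof (rule sum.neutral, rule ballI)
  fix i assume i: "i \<in> {0..m}"
  show "f $ i * g $ (m - i) = 0"
  proof (cases "(m - i) mod 3 = 0")
    case True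
    then have "i mod 3 = 2" using mod3_sub[of i m] i m by auto
    then show ?thesis using f i by auto
  next
    case False then show ?thesis using g unfolding P3_def by simp
  qed
qed

lemma V2_div:
  assumes g: "P3 g" "g $ 0 = 1" and fg: "\<forall>i\<le>m. i mod 3 = 2 \<longrightarrow> (f * g) $ i = 0"
  shows "\<forall>i\<le>m. i mod 3 = 2 \<longrightarrow> f $ i = 0"
proof (intro allI impI)
  fix i assume "i \<le> m" "i mod 3 = 2"
  then show "f $ i = 0"
  proof (induction i rule: less_induct)
    case (less i)
    have "(f * g) $ i = (\<Sum>l=0..i. f $ l * g $ (i - l))" by (rule fps_mult_nth)
    also have "\<dots> = (\<Sum>l\<in>insert i {0..<i}. f $ l * g $ (i - l))"
      by (rule sum.cong) auto
    also have "\<dots> = f $ i * g $ 0 + (\<Sum>l\<in>{0..<i}. f $ l * g $ (i - l))" by simp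
    also have "(\<Sum>l\<in>{0..<i}. f $ l * g $ (i - l)) = 0"
    proof (rule sum.neutral, rule ballI)
      fix l assume l: "l \<in> {0..<i}"
      show "f $ l * g $ (i - l) = 0"
      proof (cases "(i - l) mod 3 = 0")
        case True
        then have "l mod 3 = 2" using mod3_sub[of l i] l less.prems by auto
        then show ?thesis using less.IH[of l] l less.prems by auto
      next
        case False then show ?thesis using g unfolding P3_def by simp
      qed
    qed
    finally show ?case using fg less.prems g by simp
  qed
qed

lemma Fp_V2:
  assumes m: "m \<le> N" "m mod 3 = 2"
  shows "Fp N $ m = 0"
proof -
  have "\<forall>i\<le>m. i mod 3 = 2 \<longrightarrow> (Fp N * Q1 N) $ i = 0"
  proof (intro allI impI)
    fix i assume i: "i \<le> m" "i mod 3 = 2"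
    have "eqm (2*(N+1)) (Fp N * Q1 N * Tf N) (Fp N * Q1 N * 1)"
      by (intro eqm_mult eqm_refl Tf_eqm)
    then have "(Fp N * Q1 N) $ i = (Fp N * Q1 N * Tf N) $ i"
      using i m unfolding eqm_def by auto
    also have "Fp N * Q1 N * Tf N = JP N * poch N * Q2 N"
      using key_id[of N] unfolding Ef_Tf by (simp add: mult_ac)
    also have "(JP N * poch N * Q2 N) $ i = 0"
      by (rule V2_mult[OF _ P3_Q2 i(2)]) (use i m in \<open>auto intro: JP_V2\<close>)
    finally show "(Fp N * Q1 N) $ i = 0" .
  qed
  moreover have "Q1 N $ 0 = 1" unfolding Q1_def
    by (induction N) auto
  ultimately show ?thesis using V2_div[OF P3_Q1] m by blast
qed



definition ops :: "nat set \<Rightarrow> nat \<Rightarrow> overpartition set" where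
  "ops A b = {p. is_overpartition b p \<and> set_mset (fst p) \<subseteq> A}"

definition wt :: "(nat \<Rightarrow> complex) \<Rightarrow> overpartition \<Rightarrow> complex" where
  "wt c p = prod_mset (image_mset c (fst p))"

lemma size_le_sum: "(\<forall>x\<in>#M. 0 < x) \<Longrightarrow> size M \<le> sum_mset (M::nat multiset)"
  by (induction M) auto

lemma elem_le_sum: "x \<in># M \<Longrightarrow> x \<le> sum_mset (M::nat multiset)"
  by (induction M) auto

lemma finite_op: "finite {p. is_overpartition b p}"
proof -
  have "{p. is_overpartition b p} \<subseteq> (\<Union>n\<in>{0..b}. multisets_of_size {1..b} n) \<times> Pow {1..b}"
  proof
    fix p assume "p \<in> {p. is_overpartition b p}"
    then have p: "\<forall>x\<in>#fst p. 0 < x" "sum_mset (fst p) = b" "snd p \<subseteq> set_mset (fst p)"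
      unfolding is_overpartition_def by auto
    have s: "set_mset (fst p) \<subseteq> {1..b}" using p elem_le_sum by fastforce
    have "size (fst p) \<le> b" using size_le_sum[OF p(1)] p(2) by simp
    then show "p \<in> (\<Union>n\<in>{0..b}. multisets_of_size {1..b} n) \<times> Pow {1..b}"
      using s p(3) by (cases p) (auto simp: multisets_of_size_def)
  qed
  moreover have "finite ((\<Union>n\<in>{0..b}. multisets_of_size {1..b} n) \<times> Pow {1..b})" by auto
  ultimately show ?thesis by (rule finite_subset)
qed

lemma finite_ops: "finite (ops A b)"
  unfolding ops_def by (rule finite_subset[OF _ finite_op]) auto

lemma split_k: "M = {#x \<in># M. x \<noteq> k#} + replicate_mset (count M k) k"
  using multiset_partition[where M = M and P = "\<lambda>x. x = k"] filter_eq_replicate_mset[where D = M and x = k] by (simp add: add.commute)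

lemma count_sum: "count M k * k \<le> sum_mset (M::nat multiset)"
proof -
  have "sum_mset M = sum_mset {#x \<in># M. x \<noteq> k#} + count M k * k"
    by (subst split_k[of M k]) simp
  then show ?thesis by simp
qed

lemma filter_rep [simp]: "{#x \<in># replicate_mset j k. x \<noteq> k#} = {#}"
  by (induction j) auto

definition build :: "nat \<Rightarrow> nat \<Rightarrow> overpartition \<times> bool \<Rightarrow> overpartition" where
  "build k j q = (fst (fst q) + replicate_mset j k, if snd q then insert k (snd (fst q)) else snd (fst q))"

definition decomp :: "nat \<Rightarrow> overpartition \<Rightarrow> overpartition \<times> bool" where
  "decomp k p = ((filter_mset (\<lambda>x. x \<noteq> k) (fst p), snd p - {k}), k \<in> snd p)"

lemma block_sum:
  assumes k: "k > 0" "k \<notin> A" and j: "j \<ge> 1" "j*k \<le> b"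
  shows "(\<Sum>q\<in>ops A (b - j*k) \<times> (UNIV::bool set). c k ^ j * wt c (fst q))
       = (\<Sum>p\<in>{p\<in>ops (insert k A) b. count (fst p) k = j}. wt c p)"
proof (rule sum.reindex_bij_witness[where j = "build k j" and i = "decomp k"])
  fix q :: "overpartition \<times> bool" assume q: "q \<in> ops A (b - j*k) \<times> UNIV"
  obtain p ob where qq: "q = (p, ob)" by (cases q)
  have p: "\<forall>x\<in>#fst p. 0 < x" "sum_mset (fst p) = b - j*k" "snd p \<subseteq> set_mset (fst p)" "set_mset (fst p) \<subseteq> A"
    using q qq unfolding ops_def is_overpartition_def by auto
  have kp: "k \<notin># fst p" using p(4) k(2) by auto
  have ks: "k \<notin> snd p" using kp p(3) by auto
  have f: "{#x \<in># fst p. x \<noteq> k#} = fst p" using kp by (auto simp: filter_mset_eq_conv)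
  show "decomp k (build k j q) = q"
    unfolding qq build_def decomp_def using f ks by auto
  show "build k j q \<in> {p\<in>ops (insert k A) b. count (fst p) k = j}"
    unfolding qq build_def ops_def is_overpartition_def using p kp k j by (auto simp: not_in_iff)
  show "wt c (build k j q) = c k ^ j * wt c (fst q)"
    unfolding qq build_def wt_def by simp
next
  fix p assume "p \<in> {p\<in>ops (insert k A) b. count (fst p) k = j}"
  then have p: "\<forall>x\<in>#fst p. 0 < x" "sum_mset (fst p) = b" "snd p \<subseteq> set_mset (fst p)"
     "set_mset (fst p) \<subseteq> insert k A" "count (fst p) k = j"
    unfolding ops_def is_overpartition_def by auto
  have sp: "fst p = {#x \<in># fst p. x \<noteq> k#} + replicate_mset j k"
    using split_k[of "fst p" k] p(5) by simp
  show "build k j (decomp k p) = p"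
    unfolding build_def decomp_def using sp by (cases p) auto
  have "sum_mset (fst p) = sum_mset {#x \<in># fst p. x \<noteq> k#} + j * k"
    by (subst sp) simp
  then have s: "sum_mset {#x \<in># fst p. x \<noteq> k#} = b - j*k" using p(2) by simp
  show "decomp k p \<in> ops A (b - j*k) \<times> UNIV"
    unfolding decomp_def ops_def is_overpartition_def using p s by auto
qed

lemma gser_nth: "gser c k $ n = (if n = 0 then 1 else if k dvd n then 2 * c^(n div k) else 0)"
  unfolding gser_def by simp

lemma ops_empty: "ops {} b = (if b = 0 then {({#}, {})} else {})"
  unfolding ops_def is_overpartition_def by (auto simp: subset_empty)

lemma block0:
  assumes "k \<notin> A"
  shows "{p\<in>ops (insert k A) b. count (fst p) k = 0} = ops A b"
  using assms unfolding ops_def by (auto simp: not_in_iff[symmetric])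

lemma block_empty:
  assumes "k > 0" "b < j*k"
  shows "{p\<in>ops (insert k A) b. count (fst p) k = j} = {}"
proof -
  have cb: "count (fst p) k * k \<le> b" if "p \<in> ops (insert k A) b" for p
    using count_sum[of "fst p" k] that unfolding ops_def is_overpartition_def by auto
  show ?thesis
  proof (rule equals0I)
    fix p assume p: "p \<in> {p\<in>ops (insert k A) b. count (fst p) k = j}"
    then have "j*k \<le> b" using cb[of p] by auto
    then show False using assms by simp
  qed
qed

lemma block_sum2:
  assumes k: "k > 0" "k \<notin> A" and j: "j \<ge> 1" "j*k \<le> b"
  shows "(\<Sum>p\<in>{p\<in>ops (insert k A) b. count (fst p) k = j}. wt c p)
       = 2 * c k ^ j * (\<Sum>p\<in>ops A (b - j*k). wt c p)"
proof -
  have "(\<Sum>q\<in>ops A (b - j*k) \<times> (UNIV::bool set). c k ^ j * wt c (fst q))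
      = (\<Sum>p\<in>ops A (b - j*k). \<Sum>ob\<in>(UNIV::bool set). c k ^ j * wt c p)"
    by (simp add: sum.cartesian_product')
  also have "\<dots> = 2 * c k ^ j * (\<Sum>p\<in>ops A (b - j*k). wt c p)"
    by (simp add: UNIV_bool sum_distrib_left mult_ac)
  finally show ?thesis using block_sum[OF assms] by simp
qed

lemma OPL:
  assumes "finite A" "\<forall>k\<in>A. k > 0"
  shows "(\<Sum>p\<in>ops A b. wt c p) = (\<Prod>k\<in>A. gser (c k) k) $ b"
  using assms
proof (induction A arbitrary: b rule: finite_induct)
  case empty
  show ?case by (simp add: ops_empty wt_def)
next
  case (insert k A)
  have k: "k > 0" using insert.prems by simp
  define S where "S b' = (\<Sum>p\<in>ops A b'. wt c p)" for b'
  have IH: "S b' = (\<Prod>k\<in>A. gser (c k) k) $ b'" for b' unfolding S_def using insert by simp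
  have "(\<Sum>p\<in>ops (insert k A) b. wt c p)
      = (\<Sum>j\<in>{0..b}. \<Sum>p\<in>{p\<in>ops (insert k A) b. count (fst p) k = j}. wt c p)"
  proof (rule sum.group[symmetric])
    show "finite (ops (insert k A) b)" by (rule finite_ops)
    show "finite {0..b}" by simp
    show "(\<lambda>p. count (fst p) k) ` ops (insert k A) b \<subseteq> {0..b}"
    proof
      fix x assume "x \<in> (\<lambda>p. count (fst p) k) ` ops (insert k A) b"
      then obtain p where p: "p \<in> ops (insert k A) b" "x = count (fst p) k" by auto
      have "count (fst p) k * k \<le> b"
        using count_sum[of "fst p" k] p unfolding ops_def is_overpartition_def by auto
      moreover have "x \<le> x * k" using k by simp
      ultimately have "x \<le> b" using p(2) by (metis le_trans)
      then show "x \<in> {0..b}" by simp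
    qed
  qed
  also have "\<dots> = S b + (\<Sum>j\<in>{1..b}. if j*k \<le> b then 2 * c k ^ j * S (b - j*k) else 0)"
  proof -
    have "{0..b} = insert 0 {1..b}" by auto
    then have "(\<Sum>j\<in>{0..b}. \<Sum>p\<in>{p\<in>ops (insert k A) b. count (fst p) k = j}. wt c p)
       = (\<Sum>p\<in>{p\<in>ops (insert k A) b. count (fst p) k = 0}. wt c p)
         + (\<Sum>j\<in>{1..b}. \<Sum>p\<in>{p\<in>ops (insert k A) b. count (fst p) k = j}. wt c p)"
      by simp
    also have "(\<Sum>p\<in>{p\<in>ops (insert k A) b. count (fst p) k = 0}. wt c p) = S b"
      unfolding S_def block0[OF insert.hyps(2)] ..
    also have "(\<Sum>j\<in>{1..b}. \<Sum>p\<in>{p\<in>ops (insert k A) b. count (fst p) k = j}. wt c p)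
       = (\<Sum>j\<in>{1..b}. if j*k \<le> b then 2 * c k ^ j * S (b - j*k) else 0)"
    proof (rule sum.cong[OF refl])
      fix j assume j: "j \<in> {1..b}"
      show "(\<Sum>p\<in>{p\<in>ops (insert k A) b. count (fst p) k = j}. wt c p)
          = (if j*k \<le> b then 2 * c k ^ j * S (b - j*k) else 0)"
      proof (cases "j*k \<le> b")
        case True then show ?thesis unfolding S_def using block_sum2[OF k insert.hyps(2)] j by simp
      next
        case False
        then have "b < j*k" by simp
        then show ?thesis using False by (simp only: block_empty[OF k \<open>b < j*k\<close>] sum.empty if_False)
      qed
    qed
    finally show ?thesis .
  qed
  also have "\<dots> = (gser (c k) k * (\<Prod>k\<in>A. gser (c k) k)) $ b"
  proof -
    let ?P = "\<Prod>k\<in>A. gser (c k) k"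
    have "(gser (c k) k * ?P) $ b = (\<Sum>i=0..b. gser (c k) k $ i * S (b - i))"
      unfolding fps_mult_nth IH ..
    also have "\<dots> = S b + (\<Sum>i\<in>{1..b}. gser (c k) k $ i * S (b - i))"
    proof -
      have "{0..b} = insert 0 {1..b}" by auto
      then show ?thesis by (simp add: gser_nth)
    qed
    also have "(\<Sum>i\<in>{1..b}. gser (c k) k $ i * S (b - i))
        = (\<Sum>i\<in>(\<lambda>j. j*k) ` {j\<in>{1..b}. j*k \<le> b}. gser (c k) k $ i * S (b - i))"
    proof (rule sum.mono_neutral_right)
      show "finite {1..b}" by simp
      show "(\<lambda>j. j*k) ` {j\<in>{1..b}. j*k \<le> b} \<subseteq> {1..b}" using k by auto
      show "\<forall>i\<in>{1..b} - (\<lambda>j. j*k) ` {j\<in>{1..b}. j*k \<le> b}. gser (c k) k $ i * S (b - i) = 0"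
      proof
        fix i assume i: "i \<in> {1..b} - (\<lambda>j. j*k) ` {j\<in>{1..b}. j*k \<le> b}"
        have "\<not> k dvd i"
        proof
          assume "k dvd i"
          then obtain j where ij: "i = j*k" by (metis dvd_def mult.commute)
          have j1: "j \<ge> 1" using i ij by (cases j) auto
          have "j \<le> j*k" using k by simp
          moreover have "j*k \<le> b" using ij i by auto
          ultimately have "j \<le> b" by (metis le_trans)
          then show False using i ij j1 by auto
        qed
        then show "gser (c k) k $ i * S (b - i) = 0" using i by (simp add: gser_nth)
      qed
    qed
    also have "\<dots> = (\<Sum>j\<in>{j\<in>{1..b}. j*k \<le> b}. gser (c k) k $ (j*k) * S (b - j*k))"
      by (subst sum.reindex) (use k in \<open>auto simp: inj_on_def\<close>)
    also have "\<dots> = (\<Sum>j\<in>{1..b}. if j*k \<le> b then 2 * c k ^ j * S (b - j*k) else 0)"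
    proof -
      have "(\<Sum>j\<in>{j\<in>{1..b}. j*k \<le> b}. gser (c k) k $ (j*k) * S (b - j*k))
          = (\<Sum>j\<in>{j\<in>{1..b}. j*k \<le> b}. 2 * c k ^ j * S (b - j*k))"
        by (rule sum.cong[OF refl]) (use k in \<open>auto simp: gser_nth\<close>)
      also have "\<dots> = (\<Sum>j\<in>{1..b}. if j*k \<le> b then 2 * c k ^ j * S (b - j*k) else 0)"
        by (rule sum.inter_filter) simp
      finally show ?thesis .
    qed
    finally show ?thesis by simp
  qed
  also have "\<dots> = (\<Prod>k\<in>insert k A. gser (c k) k) $ b"
    using insert.hyps by simp
  finally show ?case .
qed

definition cr :: "nat \<Rightarrow> complex" where "cr k = (if even k then zeta else 1)"

lemma prod_pairs: "(\<Prod>k\<in>{1..2*(N::nat)}. f k) = (\<Prod>j\<in>{1..N}. f (2*j-1) * (f (2*j) :: cfps))"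
proof (induction N)
  case 0 then show ?case by simp
next
  case (Suc N)
  have "{1..2*Suc N} = {1..Suc (Suc (2*N))}" by simp
  then have "(\<Prod>k\<in>{1..2*Suc N}. f k) = (\<Prod>k\<in>{1..2*N}. f k) * f (Suc (2*N)) * f (Suc (Suc (2*N)))"
    by simp
  then show ?case using Suc.IH by (simp add: mult_ac)
qed

lemma prod_evens: "(\<Prod>k\<in>{k\<in>{1..2*(N::nat)}. even k}. f k) = (\<Prod>j\<in>{1..N}. (f (2*j) :: cfps))"
proof -
  have "{k\<in>{1..2*N}. even k} = (\<lambda>j. 2*j) ` {1..N}"
  proof
    show "{k\<in>{1..2*N}. even k} \<subseteq> (\<lambda>j. 2*j) ` {1..N}"
    proof
      fix k assume "k \<in> {k\<in>{1..2*N}. even k}"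
      then obtain j where "k = 2*j" "1 \<le> k" "k \<le> 2*N" by auto
      then show "k \<in> (\<lambda>j. 2*j) ` {1..N}" by auto
    qed
  qed auto
  then show ?thesis by (simp add: prod.reindex inj_on_def)
qed

lemma F12_Fp: "(\<Prod>k\<in>{1..2*N}. gser (cr k) k) * (\<Prod>k\<in>{k\<in>{1..2*N}. even k}. gser (zeta^2) k) = Fp N"
  unfolding prod_pairs prod_evens Fp_def G_def
  by (simp add: prod.distrib[symmetric] cr_def mult_ac)

lemma wt_cr: "wt cr p = zeta ^ size (filter_mset even (fst p))"
proof -
  have "prod_mset (image_mset cr M) = zeta ^ size (filter_mset even M)" for M
    by (induction M) (auto simp: cr_def)
  then show ?thesis unfolding wt_def by simp
qed

lemma wt_cb: "wt (\<lambda>_. zeta^2) p = zeta ^ (2 * size (fst p))"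
  unfolding wt_def by (simp add: power_mult)

definition ee :: "overpartition \<times> overpartition \<Rightarrow> nat" where
  "ee x = size (filter_mset even (fst (fst x))) + 2 * size (fst (snd x))"

lemma oc_block:
  assumes "a \<le> N"
  shows "{x\<in>overcubic N. sum_mset (fst (fst x)) = a} = ops {1..2*N} a \<times> ops {k\<in>{1..2*N}. even k} (N - a)"
proof
  show "{x\<in>overcubic N. sum_mset (fst (fst x)) = a} \<subseteq> ops {1..2*N} a \<times> ops {k\<in>{1..2*N}. even k} (N - a)"
  proof
    fix x assume x: "x \<in> {x\<in>overcubic N. sum_mset (fst (fst x)) = a}"
    obtain pr pb where xx: "x = (pr, pb)" by (cases x)
    obtain a' b' where ab: "a' + b' = N" "is_overpartition a' pr" "is_overpartition b' pb" "\<forall>y\<in>#fst pb. even y"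
      using x xx unfolding overcubic_def by auto
    have a': "a' = a" using ab(2) x xx unfolding is_overpartition_def by auto
    have "set_mset (fst pr) \<subseteq> {1..2*N}"
      using ab(2) a' assms elem_le_sum unfolding is_overpartition_def by fastforce
    moreover have "set_mset (fst pb) \<subseteq> {k\<in>{1..2*N}. even k}"
      using ab(3,4) ab(1) elem_le_sum unfolding is_overpartition_def by fastforce
    ultimately show "x \<in> ops {1..2*N} a \<times> ops {k\<in>{1..2*N}. even k} (N - a)"
      unfolding ops_def xx using ab a' by auto
  qed
next
  show "ops {1..2*N} a \<times> ops {k\<in>{1..2*N}. even k} (N - a) \<subseteq> {x\<in>overcubic N. sum_mset (fst (fst x)) = a}"
    using assms unfolding ops_def overcubic_def is_overpartition_def by fastforce
qed

lemma sum_oc: "(\<Sum>x\<in>overcubic N. zeta ^ ee x) = Fp N $ N"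
proof -
  let ?A1 = "{1..2*N}" and ?A2 = "{k\<in>{1..2*N}. even k}"
  have fin: "finite (overcubic N)"
  proof -
    have "overcubic N \<subseteq> (\<Union>a\<in>{0..N}. {p. is_overpartition a p}) \<times> (\<Union>a\<in>{0..N}. {p. is_overpartition a p})"
      unfolding overcubic_def by force
    moreover have "finite ((\<Union>a\<in>{0..N}. {p. is_overpartition a p}) \<times> (\<Union>a\<in>{0..N}. {p. is_overpartition a p}))"
      using finite_op by auto
    ultimately show ?thesis by (rule finite_subset)
  qed
  have w: "zeta ^ ee x = wt cr (fst x) * wt (\<lambda>_. zeta^2) (snd x)" for x
    unfolding ee_def wt_cr wt_cb by (simp add: power_add)
  have "(\<Sum>x\<in>overcubic N. zeta ^ ee x)
      = (\<Sum>a\<in>{0..N}. \<Sum>x\<in>{x\<in>overcubic N. sum_mset (fst (fst x)) = a}. zeta ^ ee x)"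
  proof (rule sum.group[symmetric, OF fin])
    show "finite {0..N}" by simp
    show "(\<lambda>x. sum_mset (fst (fst x))) ` overcubic N \<subseteq> {0..N}"
      unfolding overcubic_def is_overpartition_def by auto
  qed
  also have "\<dots> = (\<Sum>a\<in>{0..N}. (\<Sum>p\<in>ops ?A1 a. wt cr p) * (\<Sum>q\<in>ops ?A2 (N - a). wt (\<lambda>_. zeta^2) q))"
  proof (rule sum.cong[OF refl])
    fix a assume "a \<in> {0..N}"
    then have "{x\<in>overcubic N. sum_mset (fst (fst x)) = a} = ops ?A1 a \<times> ops ?A2 (N - a)"
      by (intro oc_block) simp
    then show "(\<Sum>x\<in>{x\<in>overcubic N. sum_mset (fst (fst x)) = a}. zeta ^ ee x)
        = (\<Sum>p\<in>ops ?A1 a. wt cr p) * (\<Sum>q\<in>ops ?A2 (N - a). wt (\<lambda>_. zeta^2) q)"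
      by (simp add: w sum_product sum.cartesian_product case_prod_unfold)
  qed
  also have "\<dots> = (\<Sum>a\<in>{0..N}. (\<Prod>k\<in>?A1. gser (cr k) k) $ a * (\<Prod>k\<in>?A2. gser (zeta^2) k) $ (N - a))"
    by (subst OPL, simp, simp)+ simp
  also have "\<dots> = Fp N $ N"
    unfolding F12_Fp[symmetric] fps_mult_nth ..
  finally show ?thesis .
qed



lemma zeta_pow_mod: "zeta ^ n = zeta ^ (n mod 3)"
proof -
  have "zeta ^ n = zeta ^ (3 * (n div 3) + n mod 3)" by simp
  also have "\<dots> = (zeta^3) ^ (n div 3) * zeta ^ (n mod 3)"
    by (simp only: power_add power_mult)
  finally have "zeta ^ n = (zeta^3) ^ (n div 3) * zeta ^ (n mod 3)" .
  then show ?thesis using zeta_cube by simp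
qed

lemma fin_oc: "finite (overcubic N)"
proof -
  have "overcubic N \<subseteq> (\<Union>a\<in>{0..N}. {p. is_overpartition a p}) \<times> (\<Union>a\<in>{0..N}. {p. is_overpartition a p})"
    unfolding overcubic_def by force
  moreover have "finite ((\<Union>a\<in>{0..N}. {p. is_overpartition a p}) \<times> (\<Union>a\<in>{0..N}. {p. is_overpartition a p}))"
    using finite_op by auto
  ultimately show ?thesis by (rule finite_subset)
qed

definition CC :: "nat \<Rightarrow> nat \<Rightarrow> nat" where
  "CC r N = card {x\<in>overcubic N. ee x mod 3 = r}"

lemma sum_CC: "(\<Sum>x\<in>overcubic N. zeta ^ ee x) = of_nat (CC 0 N) + of_nat (CC 1 N) * zeta + of_nat (CC 2 N) * zeta^2"
proof -
  have "(\<Sum>x\<in>overcubic N. zeta ^ ee x) = (\<Sum>r\<in>{0..2}. \<Sum>x\<in>{x\<in>overcubic N. ee x mod 3 = r}. zeta ^ ee x)"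
    by (rule sum.group[symmetric, OF fin_oc]) auto
  also have "\<dots> = (\<Sum>r\<in>{0..2}. of_nat (CC r N) * zeta ^ r)"
  proof (rule sum.cong[OF refl])
    fix r :: nat
    have "(\<Sum>x\<in>{x\<in>overcubic N. ee x mod 3 = r}. zeta ^ ee x) = (\<Sum>x\<in>{x\<in>overcubic N. ee x mod 3 = r}. zeta ^ r)"
    proof (rule sum.cong[OF refl])
      fix x assume "x \<in> {x\<in>overcubic N. ee x mod 3 = r}"
      then have "ee x mod 3 = r" by simp
      then show "zeta ^ ee x = zeta ^ r" using zeta_pow_mod[of "ee x"] by simp
    qed
    then show "(\<Sum>x\<in>{x\<in>overcubic N. ee x mod 3 = r}. zeta ^ ee x) = of_nat (CC r N) * zeta ^ r"
      unfolding CC_def by simp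
  qed
  also have "\<dots> = of_nat (CC 0 N) + of_nat (CC 1 N) * zeta + of_nat (CC 2 N) * zeta^2"
    by (simp add: numeral_2_eq_2)
  finally show ?thesis .
qed

lemma CC_eq:
  assumes "N mod 3 = 2"
  shows "CC 0 N = CC 1 N" "CC 1 N = CC 2 N"
proof -
  have "Fp N $ N = 0" by (rule Fp_V2) (use assms in auto)
  then have z: "of_nat (CC 0 N) + of_nat (CC 1 N) * zeta + of_nat (CC 2 N) * zeta^2 = 0"
    using sum_oc[of N] sum_CC[of N] by simp
  have zz: "zeta^2 = Complex (-1/2) (- sqrt 3 / 2)" using zeta_sq by (simp add: power2_eq_square)
  have z2: "of_nat (CC 0 N) + of_nat (CC 1 N) * Complex (-1/2) (sqrt 3 / 2) + of_nat (CC 2 N) * Complex (-1/2) (- sqrt 3 / 2) = 0"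
    using z unfolding zz unfolding zeta_def .
  have re: "real (CC 0 N) - real (CC 1 N) / 2 - real (CC 2 N) / 2 = 0"
    using arg_cong[OF z2, of Re] by simp
  have im: "real (CC 1 N) * (sqrt 3 / 2) - real (CC 2 N) * (sqrt 3 / 2) = 0"
    using arg_cong[OF z2, of Im] by simp
  then have "real (CC 1 N) = real (CC 2 N)" by (simp add: algebra_simps)
  then show "CC 1 N = CC 2 N" by simp
  with re show "CC 0 N = CC 1 N" by simp
qed

lemma crank_mod: "crank x mod 3 = int (ee x mod 3)"
proof -
  define E where "E = size (filter_mset even (fst (fst x)))"
  define B where "B = size (fst (snd x))"
  have c: "crank x = int E - int B"
    unfolding crank_def opt_len_def even_parts_def E_def B_def by simp
  have e: "int (ee x) = (int E - int B) + int B * 3"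
    unfolding ee_def E_def B_def by simp
  have "crank x mod 3 = int (ee x) mod 3" unfolding c e by (simp only: mod_mult_self1)
  then show ?thesis by (simp add: zmod_int)
qed

lemma Cbar_CC: "i \<in> {0,1,2} \<Longrightarrow> Cbar i 3 N = CC (nat i) N"
  unfolding Cbar_def CC_def cong_def
proof -
  assume i: "i \<in> {0,1,2}"
  have "\<And>x. (crank x mod int 3 = i mod int 3) = (ee x mod 3 = nat i)"
  proof -
    fix x
    have "i mod 3 = i" using i by auto
    moreover have "(int (ee x mod 3) = i) = (ee x mod 3 = nat i)" using i by auto
    ultimately show "(crank x mod int 3 = i mod int 3) = (ee x mod 3 = nat i)"
      using crank_mod[of x] by simp
  qed
  then show "card {x \<in> overcubic N. crank x mod int 3 = i mod int 3} = card {x \<in> overcubic N. ee x mod 3 = nat i}"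
    by simp
qed

lemma abar_CC: "abar N = CC 0 N + CC 1 N + CC 2 N"
proof -
  have "abar N = (\<Sum>x\<in>overcubic N. 1)" unfolding abar_def by simp
  also have "\<dots> = (\<Sum>r\<in>{0..2}. \<Sum>x\<in>{x\<in>overcubic N. ee x mod 3 = r}. 1)"
    by (rule sum.group[symmetric, OF fin_oc]) auto
  also have "\<dots> = (\<Sum>r\<in>{0..2}. CC r N)" unfolding CC_def by simp
  also have "\<dots> = CC 0 N + CC 1 N + CC 2 N" by (simp add: numeral_2_eq_2)
  finally show ?thesis .
qed

definition tg :: "nat \<Rightarrow> nat set \<Rightarrow> nat set" where
  "tg m Os = (if m \<in> Os then Os - {m} else insert m Os)"

definition tgl :: "overpartition \<Rightarrow> overpartition" where
  "tgl p = (fst p, tg (Max (set_mset (fst p))) (snd p))"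

definition flg :: "overpartition \<Rightarrow> bool" where
  "flg p = (Max (set_mset (fst p)) \<in> snd p)"

definition tog :: "overpartition \<times> overpartition \<Rightarrow> overpartition \<times> overpartition" where
  "tog x = (if fst (fst x) \<noteq> {#} then (tgl (fst x), snd x) else (fst x, tgl (snd x)))"

definition flag :: "overpartition \<times> overpartition \<Rightarrow> bool" where
  "flag x = (if fst (fst x) \<noteq> {#} then flg (fst x) else flg (snd x))"

lemma tgl_tgl: "tgl (tgl p) = p"
  unfolding tgl_def tg_def by (cases p) auto

lemma flg_tgl: "flg (tgl p) = (\<not> flg p)"
  unfolding tgl_def tg_def flg_def by auto

lemma fst_tgl [simp]: "fst (tgl p) = fst p"
  unfolding tgl_def by simp

lemma tgl_op: "fst p \<noteq> {#} \<Longrightarrow> is_overpartition b p \<Longrightarrow> is_overpartition b (tgl p)"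
proof -
  assume ne: "fst p \<noteq> {#}" and op: "is_overpartition b p"
  have "Max (set_mset (fst p)) \<in> set_mset (fst p)" using ne by (intro Max_in) auto
  then show ?thesis using op unfolding is_overpartition_def tgl_def tg_def by auto
qed

lemma tog_tog: "tog (tog x) = x"
  unfolding tog_def by (auto simp: tgl_tgl)

lemma flag_tog: "flag (tog x) = (\<not> flag x)"
  unfolding tog_def flag_def by (auto simp: flg_tgl)

lemma ee_tog: "ee (tog x) = ee x"
  unfolding tog_def ee_def by auto

lemma tog_oc:
  assumes N: "N > 0" and x: "x \<in> overcubic N"
  shows "tog x \<in> overcubic N"
proof -
  obtain pr pb where xx: "x = (pr, pb)" by (cases x)
  obtain a b where ab: "a + b = N" "is_overpartition a pr" "is_overpartition b pb" "\<forall>y\<in>#fst pb. even y"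
    using x xx unfolding overcubic_def by auto
  show ?thesis
  proof (cases "fst pr = {#}")
    case False
    then show ?thesis unfolding xx tog_def overcubic_def using ab tgl_op[OF False ab(2)] by auto
  next
    case True
    then have "a = 0" using ab(2) unfolding is_overpartition_def by auto
    then have "b > 0" using ab(1) N by simp
    then have ne: "fst pb \<noteq> {#}" using ab(3) unfolding is_overpartition_def by auto
    show ?thesis unfolding xx tog_def overcubic_def using ab tgl_op[OF ne ab(3)] True by auto
  qed
qed

lemma CC0_even:
  assumes N: "N > 0"
  shows "even (CC 0 N)"
proof -
  define S where "S = {x\<in>overcubic N. ee x mod 3 = 0}"
  define A where "A = {x\<in>S. flag x}"
  define B where "B = {x\<in>S. \<not> flag x}"
  have finS: "finite S" unfolding S_def using fin_oc by simp
  have bij: "bij_betw tog A B"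
  proof (rule bij_betw_byWitness[where f' = tog])
    show "\<forall>a\<in>A. tog (tog a) = a" by (simp add: tog_tog)
    show "\<forall>a\<in>B. tog (tog a) = a" by (simp add: tog_tog)
    show "tog ` A \<subseteq> B" unfolding A_def B_def S_def using tog_oc[OF N] by (auto simp: flag_tog ee_tog)
    show "tog ` B \<subseteq> A" unfolding A_def B_def S_def using tog_oc[OF N] by (auto simp: flag_tog ee_tog)
  qed
  have "card S = card A + card B"
  proof -
    have "S = A \<union> B" "A \<inter> B = {}" unfolding A_def B_def by auto
    moreover have "finite A" "finite B" unfolding A_def B_def using finS by auto
    ultimately show ?thesis by (simp add: card_Un_disjoint)
  qed
  moreover have "card A = card B" using bij by (rule bij_betw_same_card)
  ultimately show ?thesis unfolding CC_def S_def by simp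
qed

theorem theorem3p2:
  fixes n :: nat
  shows "Cbar 0 3 (3*n+2) = Cbar 1 3 (3*n+2) \<and> Cbar 1 3 (3*n+2) = Cbar 2 3 (3*n+2)
         \<and> 3 * Cbar 2 3 (3*n+2) = abar (3*n+2) \<and> even (abar (3*n+2) div 3)"
proof -
  let ?N = "3*n+2"
  have m: "?N mod 3 = 2" by presburger
  have c0: "Cbar 0 3 ?N = CC 0 ?N" using Cbar_CC[of 0] by simp
  have c1: "Cbar 1 3 ?N = CC 1 ?N" using Cbar_CC[of 1] by simp
  have c2: "Cbar 2 3 ?N = CC 2 ?N" using Cbar_CC[of 2] by simp
  have e1: "CC 0 ?N = CC 1 ?N" "CC 1 ?N = CC 2 ?N" using CC_eq[OF m] by auto
  have ab: "abar ?N = 3 * CC 2 ?N" using abar_CC[of ?N] e1 by simp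
  have ev: "even (CC 2 ?N)" using CC0_even[of ?N] e1 by simp
  show ?thesis unfolding c0 c1 c2 using e1 ab ev by simp
qed


end
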